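(* Let $a<b<c$ be elements of $\mathcal{C}_n$ and let $k$ be an integer with $a+1\le k\le b$. Then the layer $\mathcal{L}^{k}_{a}\left(\triangle^{(n)}\{a,b,c\}\right)=\{a_kb_{n-k-i}c_i:\ 0\le i\le n-k\}$ is a subsemiring of $\triangle^{(n)}\{a,b,c\}$.
   Context: $\mathcal{C}_n=\{0,1,\dots,n-1\}$ with its usual order; $\widehat{\mathcal{E}}_{\mathcal{C}_n}$ is the set of all order-preserving maps $\mathcal{C}_n\to\mathcal{C}_n$ (not required to fix $0$), a semiring with $(\alpha+\beta)(x)=\max(\alpha(x),\beta(x))$ and $(\alpha\cdot\beta)(x)=\beta(\alpha(x))$. The notation $a_kb_\ell c_m$ (with $k+\ell+m=n$) denotes the map sending $0,\dots,k-1$ to $a$, the next $\ell$ elements to $b$ and the last $m$ elements to $c$ (factors with subscript $0$ are omitted). The triangle $\triangle^{(n)}\{a,b,c\}$ is the set of all $\alpha\in\widehat{\mathcal{E}}_{\mathcal{C}_n}$ with image in $\{a,b,c\}$. The layer $\mathcal{L}^{k}_{a}$ is the set of elements of the triangle mapping exactly $k$ elements of $\mathcal{C}_n$ to $a$. *)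

theory Defs
  imports Main
begin

text \<open>Maps C_n -> C_n are represented as functions nat => nat which are 0 outside
  {0..<n} (so that equality of maps is equality of functions).\<close>

definition ends :: "nat \<Rightarrow> (nat \<Rightarrow> nat) set" where
  "ends n = {f. (\<forall>x<n. f x < n) \<and> (\<forall>x y. x \<le> y \<longrightarrow> y < n \<longrightarrow> f x \<le> f y)
               \<and> (\<forall>x. n \<le> x \<longrightarrow> f x = 0)}"

definition splus :: "(nat \<Rightarrow> nat) \<Rightarrow> (nat \<Rightarrow> nat) \<Rightarrow> (nat \<Rightarrow> nat)" where
  "splus f g = (\<lambda>x. max (f x) (g x))"

definition stimes :: "nat \<Rightarrow> (nat \<Rightarrow> nat) \<Rightarrow> (nat \<Rightarrow> nat) \<Rightarrow> (nat \<Rightarrow> nat)" where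
  "stimes n f g = (\<lambda>x. if x < n then g (f x) else 0)"

definition triangle :: "nat \<Rightarrow> nat set \<Rightarrow> (nat \<Rightarrow> nat) set" where
  "triangle n A = {f \<in> ends n. \<forall>x<n. f x \<in> A}"

definition layer :: "nat \<Rightarrow> nat \<Rightarrow> nat \<Rightarrow> (nat \<Rightarrow> nat) set \<Rightarrow> (nat \<Rightarrow> nat) set" where
  "layer n k a T = {f \<in> T. card {x. x < n \<and> f x = a} = k}"

text \<open>a_k b_l c_m: first k elements to a, next l to b, next m to c (k+l+m = n).\<close>
definition step3 :: "nat \<Rightarrow> nat \<Rightarrow> nat \<Rightarrow> nat \<Rightarrow> nat \<Rightarrow> nat \<Rightarrow> nat \<Rightarrow> nat" where
  "step3 a k b l c m = (\<lambda>x. if x < k then a else if x < k + l then b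
                            else if x < k + l + m then c else 0)"

definition subsemiring :: "nat \<Rightarrow> (nat \<Rightarrow> nat) set \<Rightarrow> (nat \<Rightarrow> nat) set \<Rightarrow> bool" where
  "subsemiring n S T \<longleftrightarrow> S \<subseteq> T \<and> (\<forall>f\<in>S. \<forall>g\<in>S. splus f g \<in> S \<and> stimes n f g \<in> S)"

end

theory Submission
  imports Defs
begin

lemma step3_val: "i \<le> n - k \<Longrightarrow> k \<le> n \<Longrightarrow> step3 a k b (n-k-i) c i = (\<lambda>x. if x<k then a else if x < n-i then b else if x < n then c else 0)"
  unfolding step3_def by auto
lemma mono3: assumes "i \<le> n - k" "k \<le> n" "a < b" "b < c" "x \<le> y" "y < n"
  shows "step3 a k b (n-k-i) c i x \<le> step3 a k b (n-k-i) c i y"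
  unfolding step3_val[OF assms(1,2)] using assms by auto
lemma plus: assumes "i \<le> n - k" "j \<le> n - k" "k \<le> n" "a < b" "b < c"
  shows "splus (step3 a k b (n - k - i) c i) (step3 a k b (n - k - j) c j)
      = step3 a k b (n - k - max i j) c (max i j)"
  unfolding step3_val[OF assms(1,3)] step3_val[OF assms(2,3)] step3_val[OF max.boundedI[OF assms(1,2)] assms(3)] using assms unfolding splus_def fun_eq_iff by auto
lemma t1: assumes "i \<le> n - k" "j \<le> n - k" "k \<le> n" "a < b" "b < c" "g a = a" "g b = c" "g c = c"
 "\<And>x. n \<le> x \<Longrightarrow> g x = 0"
  shows "stimes n (step3 a k b (n - k - i) c i) g = step3 a k b (n - k - (n-k)) c (n-k)"
  unfolding step3_val[OF assms(1,3)] using assms unfolding stimes_def fun_eq_iff step3_def by auto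
lemma t2: assumes "i \<le> n - k" "j \<le> n - k" "k \<le> n" "a < b" "b < c" "g a = a" "g b = b" "g c = c"
  shows "stimes n (step3 a k b (n - k - i) c i) g = step3 a k b (n - k - i) c i"
  unfolding step3_val[OF assms(1,3)] using assms unfolding stimes_def fun_eq_iff by auto
lemma t3: assumes "i \<le> n - k" "j \<le> n - k" "k \<le> n" "a < b" "b < c" "g a = a" "g b = b" "g c = b"
  shows "stimes n (step3 a k b (n - k - i) c i) g = step3 a k b (n - k - 0) c 0"
  unfolding step3_val[OF assms(1,3)] using assms unfolding stimes_def fun_eq_iff step3_def by auto

lemma downset_eq:
  assumes "S \<subseteq> {..<n}" "\<And>x y. x \<le> y \<Longrightarrow> y \<in> S \<Longrightarrow> x \<in> S"
  shows "S = {..<card S}"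
proof (cases "S = {}")
  case True then show ?thesis by simp
next
  case False
  have fin: "finite S" using assms(1) finite_subset by blast
  define m where "m = Max S"
  have "m \<in> S" using fin False m_def by simp
  have "S = {..m}"
  proof
    show "S \<subseteq> {..m}" using fin m_def by auto
    show "{..m} \<subseteq> S" using assms(2) \<open>m \<in> S\<close> by auto
  qed
  then show ?thesis by (simp add: lessThan_Suc_atMost)
qed

lemma upset_eq:
  assumes "T \<subseteq> {..<n}" "\<And>x y. x \<le> y \<Longrightarrow> y < n \<Longrightarrow> x \<in> T \<Longrightarrow> y \<in> T"
  shows "T = {n - card T..<n}"
proof (cases "T = {}")
  case True then show ?thesis by simp
next
  case False
  have fin: "finite T" using assms(1) finite_subset by blast
  define m where "m = Min T"
  have "m \<in> T" using fin False m_def by simp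
  have "T = {m..<n}"
  proof
    show "T \<subseteq> {m..<n}" using fin m_def assms(1) by auto
    show "{m..<n} \<subseteq> T" using assms(2) \<open>m \<in> T\<close> by auto
  qed
  moreover have "m < n" using \<open>m \<in> T\<close> assms(1) by auto
  ultimately show ?thesis by simp
qed

lemma layer_char:
  fixes n a b c k :: nat
  assumes "a < b" "b < c" "c < n" "a + 1 \<le> k" "k \<le> b"
  shows "layer n k a (triangle n {a, b, c})
           = {step3 a k b (n - k - i) c i | i. i \<le> n - k}"
proof
  show "layer n k a (triangle n {a, b, c}) \<subseteq> {step3 a k b (n - k - i) c i | i. i \<le> n - k}"
  proof
    fix f assume "f \<in> layer n k a (triangle n {a, b, c})"
    hence fe: "f \<in> ends n" and fv: "\<forall>x<n. f x \<in> {a,b,c}" and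
      cardS: "card {x. x < n \<and> f x = a} = k"
      unfolding layer_def triangle_def by auto
    have mono: "\<And>x y. x \<le> y \<Longrightarrow> y < n \<Longrightarrow> f x \<le> f y" and
      out: "\<And>x. n \<le> x \<Longrightarrow> f x = 0" using fe unfolding ends_def by auto
    define S where "S = {x. x < n \<and> f x = a}"
    define T where "T = {x. x < n \<and> f x = c}"
    define i where "i = card T"
    have S: "S = {..<k}"
    proof -
      have "S = {..<card S}"
      proof (rule downset_eq[of S n])
        show "S \<subseteq> {..<n}" unfolding S_def by auto
        fix x y assume "x \<le> y" "y \<in> S"
        then have yn: "y < n" "f y = a" unfolding S_def by auto
        then have "f x \<le> a" using mono[of x y] \<open>x \<le> y\<close> by simp
        moreover have "x < n" using yn \<open>x \<le> y\<close> by simp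
        ultimately show "x \<in> S" using fv assms unfolding S_def by auto
      qed
      then show ?thesis using cardS S_def by simp
    qed
    have T: "T = {n - i..<n}"
      unfolding i_def
    proof (rule upset_eq[of T n])
      show "T \<subseteq> {..<n}" unfolding T_def by auto
      fix x y assume "x \<le> y" "y < n" "x \<in> T"
      then have "f x = c" "x < n" unfolding T_def by auto
      then have "c \<le> f y" using mono[of x y] \<open>x \<le> y\<close> \<open>y < n\<close> by simp
      then show "y \<in> T" using fv assms \<open>y < n\<close> unfolding T_def by auto
    qed
    have "S \<inter> T = {}" unfolding S_def T_def using assms by auto
    moreover have "finite S" "finite T" unfolding S_def T_def by auto
    ultimately have "card (S \<union> T) = card S + card T" by (simp add: card_Un_disjoint)
    hence "card (S \<union> T) = k + i" using cardS unfolding i_def S_def by simp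
    moreover have "card (S \<union> T) \<le> n"
      using card_mono[of "{..<n}" "S \<union> T"] unfolding S_def T_def by auto
    ultimately have ki: "k + i \<le> n" by simp
    have "f = step3 a k b (n - k - i) c i"
    proof
      fix x
      show "f x = step3 a k b (n - k - i) c i x"
      proof (cases "x < n")
        case False thus ?thesis using out[of x] ki unfolding step3_def by auto
      next
        case True
        have xS: "x \<in> S \<longleftrightarrow> x < k" using S by auto
        have xT: "x \<in> T \<longleftrightarrow> n - i \<le> x" using T True by auto
        show ?thesis
        proof (cases "x < k")
          case True thus ?thesis using xS unfolding S_def step3_def by auto
        next
          case nk: False
          show ?thesis
          proof (cases "n - i \<le> x")
            case True thus ?thesis using xT nk ki \<open>x < n\<close> unfolding T_def step3_def by auto
          next
            case False
            hence "f x \<noteq> a" "f x \<noteq> c" using xS xT nk \<open>x < n\<close> unfolding S_def T_def by auto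
            hence "f x = b" using fv \<open>x < n\<close> by auto
            thus ?thesis using False nk ki unfolding step3_def by auto
          qed
        qed
      qed
    qed
    thus "f \<in> {step3 a k b (n - k - i) c i | i. i \<le> n - k}" using ki by auto
  qed
next
  show "{step3 a k b (n - k - i) c i | i. i \<le> n - k} \<subseteq> layer n k a (triangle n {a, b, c})"
  proof
    fix f assume "f \<in> {step3 a k b (n - k - i) c i | i. i \<le> n - k}"
    then obtain i where i: "i \<le> n - k" and f: "f = step3 a k b (n - k - i) c i" by auto
    have kn: "k \<le> n" using assms by simp
    have "f \<in> ends n" unfolding ends_def
    proof (intro CollectI conjI allI impI)
      fix x y assume "x \<le> y" "y < n"
      then show "f x \<le> f y" unfolding f using mono3[OF i kn] assms by simp
    next
      fix x assume "x < n" then show "f x < n" unfolding f step3_val[OF i kn] using assms by auto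
    next
      fix x assume "n \<le> x" then show "f x = 0" unfolding f step3_val[OF i kn] using kn by auto
    qed
    moreover have "\<forall>x<n. f x \<in> {a,b,c}" unfolding f step3_def using i kn by auto
    moreover have "{x. x < n \<and> f x = a} = {..<k}" unfolding f step3_def using assms i by auto
    ultimately show "f \<in> layer n k a (triangle n {a, b, c})"
      unfolding layer_def triangle_def by auto
  qed
qed

theorem proposition27:
  fixes n a b c k :: nat
  assumes "a < b" "b < c" "c < n" "a + 1 \<le> k" "k \<le> b"
  shows "layer n k a (triangle n {a, b, c})
           = {step3 a k b (n - k - i) c i | i. i \<le> n - k}
         \<and> subsemiring n (layer n k a (triangle n {a, b, c})) (triangle n {a, b, c})"
proof -
  note L = layer_char[OF assms]
  have kn: "k \<le> n" using assms by simp
  have times: "\<exists>l \<le> n - k. stimes n (step3 a k b (n - k - i) c i) (step3 a k b (n - k - j) c j)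
      = step3 a k b (n - k - l) c l" if ij: "i \<le> n - k" "j \<le> n - k" for i j
  proof -
    let ?g = "step3 a k b (n - k - j) c j"
    have gv: "?g = (\<lambda>x. if x<k then a else if x < n-j then b else if x < n then c else 0)"
      using step3_val[OF ij(2) kn] .
    have ga: "?g a = a" using assms unfolding gv by auto
    have g0: "\<And>x. n \<le> x \<Longrightarrow> ?g x = 0" unfolding gv using kn by auto
    consider "n - j \<le> b" | "b < n - j" "n - j \<le> c" | "c < n - j" by linarith
    then show ?thesis
    proof cases
      case 1
      have gb: "?g b = c" and gc: "?g c = c" using 1 assms unfolding gv by auto
      show ?thesis using t1[OF ij kn assms(1,2) ga gb gc g0] by auto
    next
      case 2
      have gb: "?g b = b" and gc: "?g c = c" using 2 assms unfolding gv by auto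
      show ?thesis using t2[OF ij kn assms(1,2) ga gb gc] ij by auto
    next
      case 3
      have gb: "?g b = b" and gc: "?g c = b" using 3 assms unfolding gv by auto
      show ?thesis using t3[OF ij kn assms(1,2) ga gb gc] by auto
    qed
  qed
  have sub: "layer n k a (triangle n {a, b, c}) \<subseteq> triangle n {a, b, c}"
    unfolding layer_def by auto
  show ?thesis
    unfolding subsemiring_def
  proof (intro conjI L sub ballI)
    fix f g assume "f \<in> layer n k a (triangle n {a, b, c})" "g \<in> layer n k a (triangle n {a, b, c})"
    then obtain i j where ij: "i \<le> n - k" "j \<le> n - k"
      and f: "f = step3 a k b (n - k - i) c i" and g: "g = step3 a k b (n - k - j) c j"
      unfolding L by auto
    show "splus f g \<in> layer n k a (triangle n {a, b, c})"
      unfolding L f g plus[OF ij kn assms(1,2)] using ij by auto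
    show "stimes n f g \<in> layer n k a (triangle n {a, b, c})"
      unfolding L f g using times[OF ij] by auto
  qed
qed

end
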